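(* Let $\tau>0$, $u_n\in\mathcal V_{[0,1]}$, $X:=\{u\in\mathcal V_{[0,1]}:\mathcal M(u)=\mathcal M(u_n)\}$, and for $\lambda\le1$ let $f_\lambda(u):=(1-\lambda)\|u\|^2_{\mathcal V}-2\langle u,e^{-\tau\Delta}u_n\rangle_{\mathcal V}$. Then $f_\lambda\to f_1$ uniformly on $X$ as $\lambda\uparrow1$. Furthermore, if for each $\lambda$ in a set accumulating at $1$ from below, $u^\lambda\in X$ minimises $f_\lambda$ over $X$, and $u^\lambda\to u$ as $\lambda\uparrow1$, then $u\in X$ and $u$ maximises $\langle v,e^{-\tau\Delta}u_n\rangle_{\mathcal V}$ over $v\in X$.
   Context: $G=(V,E)$ is a finite, simple, connected, undirected graph with weights $\omega_{ij}=\omega_{ji}>0$ for $ij\in E$, $\omega_{ij}=0$ otherwise; $d_i=\sum_j\omega_{ij}$, $r\in[0,1]$ fixed. $\mathcal V$ = functions $V\to\mathbb R$ with $\langle u,v\rangle_{\mathcal V}=\sum_i u_iv_id_i^r$ and norm $\|\cdot\|_{\mathcal V}$; $\mathcal V_{[0,1]}$ = functions $V\to[0,1]$. $(\Delta u)_i=d_i^{-r}\sum_j\omega_{ij}(u_i-u_j)$, $e^{-\tau\Delta}$ its matrix exponential. $\mathbf 1$ all-ones; $\mathcal M(u)=\langle u,\mathbf 1\rangle_{\mathcal V}$. *)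

theory Defs
  imports "HOL-Analysis.Analysis"
begin

text \<open>Weighted graph on the finite vertex type 'a, given by a weight function w
  (w i j > 0 iff ij is an edge, w i j = 0 otherwise).\<close>

definition weighted_graph :: "('a::finite \<Rightarrow> 'a \<Rightarrow> real) \<Rightarrow> bool" where
  "weighted_graph w \<longleftrightarrow> (\<forall>i j. w i j = w j i) \<and> (\<forall>i j. 0 \<le> w i j) \<and> (\<forall>i. w i i = 0)"

definition graph_connected :: "('a::finite \<Rightarrow> 'a \<Rightarrow> real) \<Rightarrow> bool" where
  "graph_connected w \<longleftrightarrow> (\<forall>i j. (i, j) \<in> {(x, y). 0 < w x y}\<^sup>*)"

definition deg :: "('a::finite \<Rightarrow> 'a \<Rightarrow> real) \<Rightarrow> 'a \<Rightarrow> real" where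
  "deg w i = (\<Sum>j\<in>UNIV. w i j)"

definition innerV :: "('a::finite \<Rightarrow> 'a \<Rightarrow> real) \<Rightarrow> real \<Rightarrow> ('a \<Rightarrow> real) \<Rightarrow> ('a \<Rightarrow> real) \<Rightarrow> real" where
  "innerV w r u v = (\<Sum>i\<in>UNIV. u i * v i * (deg w i) powr r)"

definition normV :: "('a::finite \<Rightarrow> 'a \<Rightarrow> real) \<Rightarrow> real \<Rightarrow> ('a \<Rightarrow> real) \<Rightarrow> real" where
  "normV w r u = sqrt (innerV w r u u)"

definition massV :: "('a::finite \<Rightarrow> 'a \<Rightarrow> real) \<Rightarrow> real \<Rightarrow> ('a \<Rightarrow> real) \<Rightarrow> real" where
  "massV w r u = innerV w r u (\<lambda>_. 1)"

definition V01 :: "('a \<Rightarrow> real) set" where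
  "V01 = {u. \<forall>i. 0 \<le> u i \<and> u i \<le> 1}"

definition graph_lap :: "('a::finite \<Rightarrow> 'a \<Rightarrow> real) \<Rightarrow> real \<Rightarrow> ('a \<Rightarrow> real) \<Rightarrow> 'a \<Rightarrow> real" where
  "graph_lap w r u i = (deg w i) powr (- r) * (\<Sum>j\<in>UNIV. w i j * (u i - u j))"

text \<open>Matrix exponential e^{-t Delta} applied to u, via its (absolutely convergent) power series.\<close>
definition heat :: "('a::finite \<Rightarrow> 'a \<Rightarrow> real) \<Rightarrow> real \<Rightarrow> real \<Rightarrow> ('a \<Rightarrow> real) \<Rightarrow> 'a \<Rightarrow> real" where
  "heat w r t u i = (\<Sum>k. (- t) ^ k / fact k * ((graph_lap w r ^^ k) u i))"

end

theory Submission
  imports Defs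
begin

lemma pw_tendsto:
  fixes U :: "real \<Rightarrow> 'a \<Rightarrow> real"
  assumes "(U \<longlongrightarrow> u) F"
  shows "((\<lambda>l. U l i) \<longlongrightarrow> u i) F"
  using continuous_on_tendsto_compose[OF continuous_on_product_coordinates[of i] assms] by simp

lemma innerV_tendsto:
  fixes U :: "real \<Rightarrow> 'a::finite \<Rightarrow> real"
  assumes "(U \<longlongrightarrow> u) F"
  shows "((\<lambda>l. innerV w r (U l) h) \<longlongrightarrow> innerV w r u h) F"
  unfolding innerV_def
  by (intro tendsto_intros pw_tendsto assms)

lemma deg_nonneg: "weighted_graph w \<Longrightarrow> 0 \<le> deg w i"
  unfolding deg_def weighted_graph_def by (simp add: sum_nonneg)

lemma innerV_self_bounds:
  assumes "weighted_graph w" "u \<in> V01"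
  shows "0 \<le> innerV w r u u \<and> innerV w r u u \<le> (\<Sum>i\<in>UNIV. (deg w i) powr r)"
proof -
  have "\<And>i. 0 \<le> u i * u i * (deg w i) powr r" by simp
  moreover have "\<And>i. u i * u i * (deg w i) powr r \<le> (deg w i) powr r"
  proof -
    fix i
    have "0 \<le> u i" "u i \<le> 1" using assms(2) by (auto simp: V01_def)
    then have "u i * u i \<le> 1" by (simp add: mult_le_one)
    then show "u i * u i * (deg w i) powr r \<le> (deg w i) powr r"
      using mult_right_mono[of "u i * u i" 1 "(deg w i) powr r"] by simp
  qed
  ultimately show ?thesis unfolding innerV_def by (auto intro: sum_nonneg sum_mono)
qed

theorem theorem30:
  fixes w :: "'a::finite \<Rightarrow> 'a \<Rightarrow> real" and r \<tau> :: real and un :: "'a \<Rightarrow> real"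
    and X :: "('a \<Rightarrow> real) set" and f :: "real \<Rightarrow> ('a \<Rightarrow> real) \<Rightarrow> real"
  assumes "weighted_graph w" and "graph_connected w"
    and "0 \<le> r" and "r \<le> 1"
    and "0 < \<tau>" and "un \<in> V01"
    and X_eq: "X = {u \<in> V01. massV w r u = massV w r un}"
    and f_eq: "\<And>l u. f l u = (1 - l) * (normV w r u)\<^sup>2 - 2 * innerV w r u (heat w r \<tau> un)"
  shows "uniform_limit X f (f 1) (at_left 1) \<and>
         (\<forall>(S :: real set) (U :: real \<Rightarrow> 'a \<Rightarrow> real) u.
           S \<subseteq> {..<1} \<and> 1 islimpt S
           \<and> (\<forall>l\<in>S. U l \<in> X \<and> (\<forall>v\<in>X. f l (U l) \<le> f l v))
           \<and> (U \<longlongrightarrow> u) (at 1 within S)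
         \<longrightarrow> u \<in> X \<and> (\<forall>v\<in>X. innerV w r v (heat w r \<tau> un) \<le> innerV w r u (heat w r \<tau> un)))"
proof -
  define C where "C = (\<Sum>i\<in>UNIV. (deg w i) powr r)"
  define h where "h = heat w r \<tau> un"
  have C0: "0 \<le> C" unfolding C_def by (simp add: sum_nonneg)
  have nsq: "\<And>u. u \<in> V01 \<Longrightarrow> (normV w r u)\<^sup>2 = innerV w r u u \<and> 0 \<le> innerV w r u u \<and> innerV w r u u \<le> C"
    unfolding normV_def C_def using innerV_self_bounds[OF assms(1)] by auto
  have fdiff: "\<And>l u. f l u - f 1 u = (1 - l) * (normV w r u)\<^sup>2" using f_eq by simp
  have part1: "uniform_limit X f (f 1) (at_left 1)"
  proof (rule uniform_limitI)
    fix e :: real assume e: "e > 0"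
    have ev: "\<forall>\<^sub>F l in at_left (1::real). 1 - e / (C + 1) < l \<and> l < 1"
    proof -
      have "1 - e / (C + 1) < 1" using e C0 by simp
      from eventually_at_left_real[OF this] show ?thesis by (auto elim: eventually_mono)
    qed
    show "\<forall>\<^sub>F l in at_left 1. \<forall>x\<in>X. dist (f l x) (f 1 x) < e"
      using ev
    proof eventually_elim
      case (elim l)
      show ?case
      proof
        fix x assume "x \<in> X"
        then have x: "x \<in> V01" using X_eq by auto
        have "dist (f l x) (f 1 x) = (1 - l) * innerV w r x x"
          using fdiff[of l x] nsq[OF x] elim by (simp add: dist_real_def)
        also have "\<dots> \<le> (1 - l) * C" using nsq[OF x] elim by (intro mult_left_mono) auto
        also have "\<dots> < e / (C + 1) * (C + 1)"
        proof -
          have "1 - l < e / (C + 1)" using elim by simp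
          then have "(1 - l) * C \<le> e / (C + 1) * C" using C0 by (intro mult_right_mono) auto
          also have "\<dots> < e / (C + 1) * (C + 1)" using e C0 by (intro mult_strict_left_mono) auto
          finally show ?thesis .
        qed
        also have "\<dots> = e" using C0 by simp
        finally show "dist (f l x) (f 1 x) < e" .
      qed
    qed
  qed
  have part2: "u \<in> X \<and> (\<forall>v\<in>X. innerV w r v h \<le> innerV w r u h)"
    if S1: "S \<subseteq> {..<1}" and S2: "1 islimpt S"
      and S3: "\<forall>l\<in>S. U l \<in> X \<and> (\<forall>v\<in>X. f l (U l) \<le> f l v)"
      and S4: "(U \<longlongrightarrow> u) (at 1 within S)" for S and U :: "real \<Rightarrow> 'a \<Rightarrow> real" and u
  proof -
    let ?F = "at (1::real) within S"
    have nt: "?F \<noteq> bot" using S2 trivial_limit_within by blast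
    have evS: "\<forall>\<^sub>F l in ?F. l \<in> S" by (simp add: eventually_at_filter)
    have evX: "\<forall>\<^sub>F l in ?F. U l \<in> X" using evS by eventually_elim (use S3 in auto)
    have uV: "u \<in> V01"
    proof -
      have "0 \<le> u i \<and> u i \<le> 1" for i
      proof
        have t: "((\<lambda>l. U l i) \<longlongrightarrow> u i) ?F" by (rule pw_tendsto[OF S4])
        have a: "\<forall>\<^sub>F l in ?F. 0 \<le> U l i \<and> U l i \<le> 1"
          using evX by eventually_elim (auto simp: X_eq V01_def)
        show "0 \<le> u i" by (rule tendsto_lowerbound[OF t _ nt]) (use a in \<open>auto elim: eventually_mono\<close>)
        show "u i \<le> 1" by (rule tendsto_upperbound[OF t _ nt]) (use a in \<open>auto elim: eventually_mono\<close>)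
      qed
      then show ?thesis by (simp add: V01_def)
    qed
    have um: "massV w r u = massV w r un"
    proof -
      have t: "((\<lambda>l. massV w r (U l)) \<longlongrightarrow> massV w r u) ?F"
        unfolding massV_def by (rule innerV_tendsto[OF S4])
      have "((\<lambda>l. massV w r (U l)) \<longlongrightarrow> massV w r un) ?F"
        using evX by (intro tendsto_eventually[THEN tendsto_cong[THEN iffD1, rotated]])
           (auto simp: X_eq elim: eventually_mono)
      then show ?thesis using tendsto_unique[OF nt t] by simp
    qed
    have uX: "u \<in> X" using uV um X_eq by simp
    have "innerV w r v h \<le> innerV w r u h" if vX: "v \<in> X" for v
    proof -
      have vV: "v \<in> V01" using vX X_eq by simp
      have ineq: "\<forall>\<^sub>F l in ?F. 2 * innerV w r v h - 2 * innerV w r (U l) h \<le> (1 - l) * C"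
        using evS
      proof eventually_elim
        case (elim l)
        have UX: "U l \<in> X" and le: "f l (U l) \<le> f l v" using S3 elim vX by auto
        have UV: "U l \<in> V01" using UX X_eq by simp
        have l1: "l < 1" using S1 elim by auto
        have "2 * innerV w r v h - 2 * innerV w r (U l) h \<le> (1 - l) * (innerV w r v v - innerV w r (U l) (U l))"
          using le f_eq[of l "U l"] f_eq[of l v] nsq[OF UV] nsq[OF vV] unfolding h_def by (simp add: algebra_simps)
        also have "\<dots> \<le> (1 - l) * C" using l1 nsq[OF UV] nsq[OF vV] by (intro mult_left_mono) auto
        finally show ?case .
      qed
      have t1: "((\<lambda>l. 2 * innerV w r v h - 2 * innerV w r (U l) h) \<longlongrightarrow> 2 * innerV w r v h - 2 * innerV w r u h) ?F"
        by (intro tendsto_intros innerV_tendsto S4)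
      have t2: "((\<lambda>l. (1 - l) * C) \<longlongrightarrow> (1 - 1) * C) ?F"
        by (intro tendsto_intros)
      have "2 * innerV w r v h - 2 * innerV w r u h \<le> (1 - 1) * C"
        by (rule tendsto_le[OF nt t2 t1 ineq])
      then show ?thesis by simp
    qed
    then show ?thesis using uX by blast
  qed
  show ?thesis using part1 part2 unfolding h_def by blast
qed

end
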